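(* Let $n\ge1$, let $\alpha_1,\dots,\alpha_n$ be constants, and let $u_i(z),v_i(z)$, $i=1,\dots,n$, be scalar functions satisfying \[ u_i''+2s\,u_i+\tfrac12 z u_i+\alpha_iu_i=0,\qquad v_i''+2s\,v_i+\tfrac12 z v_i+\alpha_iv_i=0,\qquad s=\sum_{j=1}^n u_jv_j \] (i.e. the system $\mathbf u''+2(\mathbf u,\mathbf v)\mathbf u+\frac12z\mathbf u+A\mathbf u=0$, $\mathbf v''+2(\mathbf u,\mathbf v)\mathbf v+\frac12z\mathbf v+A^T\mathbf v=0$ with $A=\operatorname{diag}(\alpha_1,\dots,\alpha_n)$). Then $u_iv'_i-u'_iv_i=c_i$ are constants, and the products $y_i=u_iv_i$ satisfy \[ y''_i=\frac{(y'_i)^2-c^2_i}{2y_i}-y_i(4y_1+\dots+4y_n+z+2\alpha_i),\qquad i=1,\dots,n. \]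
   Context: Primes denote derivatives with respect to $z$. *)

theory Defs
  imports "HOL-Analysis.Analysis"
begin

end

theory Submission
  imports Defs "HOL-Complex_Analysis.Complex_Analysis"
begin

theorem mainTheorem9:
  fixes n :: nat and S :: "complex set"
    and alpha :: "nat \<Rightarrow> complex" and u v :: "nat \<Rightarrow> complex \<Rightarrow> complex"
  assumes "n \<ge> 1"
    and "open S" and "connected S"
    and hol_u: "\<And>i. i < n \<Longrightarrow> u i holomorphic_on S"
    and hol_v: "\<And>i. i < n \<Longrightarrow> v i holomorphic_on S"
    and eq_u: "\<And>i z. i < n \<Longrightarrow> z \<in> S \<Longrightarrow>
        deriv (deriv (u i)) z + 2 * (\<Sum>j<n. u j z * v j z) * u i z + z / 2 * u i z + alpha i * u i z = 0"
    and eq_v: "\<And>i z. i < n \<Longrightarrow> z \<in> S \<Longrightarrow>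
        deriv (deriv (v i)) z + 2 * (\<Sum>j<n. u j z * v j z) * v i z + z / 2 * v i z + alpha i * v i z = 0"
  shows "\<forall>i<n. \<exists>c :: complex.
           (\<forall>z\<in>S. u i z * deriv (v i) z - deriv (u i) z * v i z = c) \<and>
           (\<forall>z\<in>S. u i z * v i z \<noteq> 0 \<longrightarrow>
              deriv (deriv (\<lambda>w. u i w * v i w)) z =
                ((deriv (\<lambda>w. u i w * v i w) z)\<^sup>2 - c\<^sup>2) / (2 * (u i z * v i z))
                - (u i z * v i z) * (4 * (\<Sum>j<n. u j z * v j z) + z + 2 * alpha i))"
proof (intro allI impI)
  fix i assume i: "i < n"
  define U where "U = u i"
  define V where "V = v i"
  define s where "s = (\<lambda>z. \<Sum>j<n. u j z * v j z)"
  have hU: "U holomorphic_on S" and hV: "V holomorphic_on S"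
    using hol_u hol_v i by (auto simp: U_def V_def)
  have hU': "deriv U holomorphic_on S" and hV': "deriv V holomorphic_on S"
    using hU hV \<open>open S\<close> by (auto intro: holomorphic_deriv)
  have dU: "\<And>z. z \<in> S \<Longrightarrow> (U has_field_derivative deriv U z) (at z)"
    using hU \<open>open S\<close> holomorphic_derivI by blast
  have dV: "\<And>z. z \<in> S \<Longrightarrow> (V has_field_derivative deriv V z) (at z)"
    using hV \<open>open S\<close> holomorphic_derivI by blast
  have dU': "\<And>z. z \<in> S \<Longrightarrow> (deriv U has_field_derivative deriv (deriv U) z) (at z)"
    using hU' \<open>open S\<close> holomorphic_derivI by blast
  have dV': "\<And>z. z \<in> S \<Longrightarrow> (deriv V has_field_derivative deriv (deriv V) z) (at z)"
    using hV' \<open>open S\<close> holomorphic_derivI by blast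
  have eU: "\<And>z. z \<in> S \<Longrightarrow> deriv (deriv U) z = - (2 * s z + z/2 + alpha i) * U z"
    using eq_u[OF i] unfolding U_def s_def by (auto simp: algebra_simps eq_neg_iff_add_eq_0)
  have eV: "\<And>z. z \<in> S \<Longrightarrow> deriv (deriv V) z = - (2 * s z + z/2 + alpha i) * V z"
    using eq_v[OF i] unfolding V_def s_def by (auto simp: algebra_simps eq_neg_iff_add_eq_0)
  define W where "W = (\<lambda>z. U z * deriv V z - deriv U z * V z)"
  have dW: "\<And>z. z \<in> S \<Longrightarrow> (W has_field_derivative 0) (at z)"
  proof -
    fix z assume z: "z \<in> S"
    have "(W has_field_derivative (deriv U z * deriv V z + U z * deriv (deriv V) z
         - (deriv (deriv U) z * V z + deriv U z * deriv V z))) (at z)"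
      unfolding W_def using z by (auto intro!: derivative_eq_intros dU dV dU' dV')
    moreover have "deriv U z * deriv V z + U z * deriv (deriv V) z
         - (deriv (deriv U) z * V z + deriv U z * deriv V z) = 0"
      unfolding eU[OF z] eV[OF z] by (simp add: algebra_simps)
    ultimately show "(W has_field_derivative 0) (at z)" by simp
  qed
  have "continuous_on S W"
    using dW by (meson DERIV_isCont continuous_at_imp_continuous_on)
  then obtain c where c: "\<And>z. z \<in> S \<Longrightarrow> W z = c"
    using DERIV_zero_connected_constant[of S "{}" W] \<open>connected S\<close> \<open>open S\<close> dW by auto
  have dY: "\<And>z. z \<in> S \<Longrightarrow> deriv (\<lambda>w. U w * V w) z = deriv U z * V z + U z * deriv V z"
    using dU dV by (intro DERIV_imp_deriv) (auto intro!: derivative_eq_intros)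
  have dY2: "\<And>z. z \<in> S \<Longrightarrow> deriv (deriv (\<lambda>w. U w * V w)) z =
     deriv (deriv U) z * V z + 2 * deriv U z * deriv V z + U z * deriv (deriv V) z"
  proof -
    fix z assume z: "z \<in> S"
    have "((\<lambda>w. deriv U w * V w + U w * deriv V w) has_field_derivative
       (deriv (deriv U) z * V z + deriv U z * deriv V z + (deriv U z * deriv V z + U z * deriv (deriv V) z))) (at z)"
      using z by (auto intro!: derivative_eq_intros dU dV dU' dV')
    hence "(deriv (\<lambda>w. U w * V w) has_field_derivative
       (deriv (deriv U) z * V z + deriv U z * deriv V z + (deriv U z * deriv V z + U z * deriv (deriv V) z))) (at z)"
      by (rule has_field_derivative_transform_within_open[OF _ \<open>open S\<close> z]) (simp add: dY)
    thus "deriv (deriv (\<lambda>w. U w * V w)) z =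
     deriv (deriv U) z * V z + 2 * deriv U z * deriv V z + U z * deriv (deriv V) z"
      by (simp add: DERIV_imp_deriv algebra_simps)
  qed
  show "\<exists>c :: complex.
           (\<forall>z\<in>S. u i z * deriv (v i) z - deriv (u i) z * v i z = c) \<and>
           (\<forall>z\<in>S. u i z * v i z \<noteq> 0 \<longrightarrow>
              deriv (deriv (\<lambda>w. u i w * v i w)) z =
                ((deriv (\<lambda>w. u i w * v i w) z)\<^sup>2 - c\<^sup>2) / (2 * (u i z * v i z))
                - (u i z * v i z) * (4 * (\<Sum>j<n. u j z * v j z) + z + 2 * alpha i))"
  proof (intro exI conjI ballI impI)
    fix z assume "z \<in> S"
    thus "u i z * deriv (v i) z - deriv (u i) z * v i z = c"
      using c unfolding W_def U_def V_def by auto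
  next
    fix z assume z: "z \<in> S" and nz: "u i z * v i z \<noteq> 0"
    have cz: "c = U z * deriv V z - deriv U z * V z" using c[OF z] W_def by auto
    have "((deriv (\<lambda>w. U w * V w) z)\<^sup>2 - c\<^sup>2) = 4 * (U z * V z) * (deriv U z * deriv V z)"
      by (simp add: dY[OF z] cz power2_eq_square algebra_simps)
    hence q: "((deriv (\<lambda>w. U w * V w) z)\<^sup>2 - c\<^sup>2) / (2 * (U z * V z)) = 2 * deriv U z * deriv V z"
      using nz by (simp add: U_def V_def)
    show "deriv (deriv (\<lambda>w. u i w * v i w)) z =
                ((deriv (\<lambda>w. u i w * v i w) z)\<^sup>2 - c\<^sup>2) / (2 * (u i z * v i z))
                - (u i z * v i z) * (4 * (\<Sum>j<n. u j z * v j z) + z + 2 * alpha i)"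
    proof -
      have "deriv (deriv (\<lambda>w. U w * V w)) z =
                ((deriv (\<lambda>w. U w * V w) z)\<^sup>2 - c\<^sup>2) / (2 * (U z * V z))
                - (U z * V z) * (4 * s z + z + 2 * alpha i)"
        unfolding q dY2[OF z] eU[OF z] eV[OF z] by (simp add: algebra_simps)
      thus ?thesis unfolding U_def V_def s_def .
    qed
  qed
qed

end
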